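(* Let $k\ge2$ and let $r=(r_{ij})$ be a maximally-connected coupling of the 1-2 system of $(R^1,R^2)$. Suppose $r_{ij}>0$ for some $i\neq j$. If $p_i+p_j\le q_i+q_j$, then $r_{ab}=0$ for all $a\ne b$ with $b\neq j$ (all nonzero off-diagonal entries lie in column $j$). If $p_i+p_j\ge q_i+q_j$, then $r_{ab}=0$ for all $a\ne b$ with $a\neq i$ (all nonzero off-diagonal entries lie in row $i$).
   Context: Let $R^1,R^2$ be two stochastically unrelated random variables with values in $\{1,\dots,k\}$, $\Pr[R^1=i]=p_i$, $\Pr[R^2=i]=q_i$, where $p_i,q_i\ge0$ and $\sum_i p_i=\sum_i q_i=1$. A maximally-connected coupling of the 1-2 system is a $k\times k$ matrix $r=(r_{ij})$ of nonnegative reals such that: $\sum_j r_{ij}=p_i$ and $\sum_i r_{ij}=q_j$ for all $i,j$; $r_{ii}=\min(p_i,q_i)$ for all $i$; and $r_{ii}+r_{ij}+r_{ji}+r_{jj}=\min(p_i+p_j,q_i+q_j)$ for all $i<j$. *)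

theory Defs
  imports Main "HOL.Real"
begin

text \<open>Distributions p, q on {1..k} and a k x k matrix r, all as functions on nat,
only values at indices in {1..k} matter.\<close>

definition is_distr :: "nat \<Rightarrow> (nat \<Rightarrow> real) \<Rightarrow> bool" where
  "is_distr k p \<longleftrightarrow> (\<forall>i\<in>{1..k}. p i \<ge> 0) \<and> (\<Sum>i=1..k. p i) = 1"

definition max_connected_coupling ::
  "nat \<Rightarrow> (nat \<Rightarrow> real) \<Rightarrow> (nat \<Rightarrow> real) \<Rightarrow> (nat \<Rightarrow> nat \<Rightarrow> real) \<Rightarrow> bool" where
  "max_connected_coupling k p q r \<longleftrightarrow>
     (\<forall>i\<in>{1..k}. \<forall>j\<in>{1..k}. r i j \<ge> 0) \<and>
     (\<forall>i\<in>{1..k}. (\<Sum>j=1..k. r i j) = p i) \<and>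
     (\<forall>j\<in>{1..k}. (\<Sum>i=1..k. r i j) = q j) \<and>
     (\<forall>i\<in>{1..k}. r i i = min (p i) (q i)) \<and>
     (\<forall>i\<in>{1..k}. \<forall>j\<in>{1..k}. i < j \<longrightarrow>
        r i i + r i j + r j i + r j j = min (p i + p j) (q i + q j))"

end

theory Submission
  imports Defs
begin

lemma zero_rest:
  fixes f :: "nat \<Rightarrow> real"
  assumes "finite A" "\<forall>x\<in>A. f x \<ge> 0" "B \<subseteq> A" "sum f A \<le> sum f B" "c \<in> A - B"
  shows "f c = 0"
proof -
  have "sum f A = sum f B + sum f (A - B)"
    using assms(1,3) by (metis add.commute finite_subset sum.subset_diff)
  hence "sum f (A - B) \<le> 0" using assms(4) by simp
  moreover have "sum f (A - B) \<ge> 0" using assms(2) by (intro sum_nonneg) auto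
  ultimately have "sum f (A - B) = 0" by simp
  hence "\<forall>x\<in>A-B. f x = 0" using assms(1,2) by (subst (asm) sum_nonneg_eq_0_iff) auto
  thus ?thesis using assms(5) by blast
qed

theorem mainTheorem7:
  fixes k :: nat and p q :: "nat \<Rightarrow> real" and r :: "nat \<Rightarrow> nat \<Rightarrow> real"
    and i j :: nat
  assumes "k \<ge> 2"
    and "is_distr k p" and "is_distr k q"
    and "max_connected_coupling k p q r"
    and "i \<in> {1..k}" and "j \<in> {1..k}" and "i \<noteq> j" and "r i j > 0"
  shows "(p i + p j \<le> q i + q j \<longrightarrow>
            (\<forall>a\<in>{1..k}. \<forall>b\<in>{1..k}. a \<noteq> b \<and> b \<noteq> j \<longrightarrow> r a b = 0))
       \<and> (p i + p j \<ge> q i + q j \<longrightarrow>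
            (\<forall>a\<in>{1..k}. \<forall>b\<in>{1..k}. a \<noteq> b \<and> a \<noteq> i \<longrightarrow> r a b = 0))"
proof -
  let ?K = "{1..k::nat}"
  have nn: "\<forall>a\<in>?K. \<forall>b\<in>?K. r a b \<ge> 0"
   and rows: "\<forall>a\<in>?K. (\<Sum>b=1..k. r a b) = p a"
   and cols: "\<forall>b\<in>?K. (\<Sum>a=1..k. r a b) = q b"
   and diag: "\<forall>a\<in>?K. r a a = min (p a) (q a)"
   and pr: "\<forall>a\<in>?K. \<forall>b\<in>?K. a < b \<longrightarrow>
        r a a + r a b + r b a + r b b = min (p a + p b) (q a + q b)"
    using assms(4) unfolding max_connected_coupling_def by auto
  have pairs: "r a a + r a b + r b a + r b b = min (p a + p b) (q a + q b)"
    if "a \<in> ?K" "b \<in> ?K" "a \<noteq> b" for a b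
  proof (cases "a < b")
    case True thus ?thesis using pr that by blast
  next
    case False
    hence "b < a" using that by simp
    hence "r b b + r b a + r a b + r a a = min (p b + p a) (q b + q a)" using pr that by blast
    thus ?thesis by (simp add: algebra_simps)
  qed
  have rowz: "r a b = 0" if "a \<in> ?K" "b \<in> ?K" "p a \<le> q a" "a \<noteq> b" for a b
  proof -
    have "(\<Sum>c\<in>?K. r a c) \<le> sum (r a) {a}" using rows diag that by auto
    thus ?thesis using zero_rest[of ?K "r a" "{a}" b] nn that by auto
  qed
  have colz: "r a b = 0" if "a \<in> ?K" "b \<in> ?K" "q b \<le> p b" "a \<noteq> b" for a b
  proof -
    have "(\<Sum>c\<in>?K. r c b) \<le> sum (\<lambda>c. r c b) {b}" using cols diag that by auto
    thus ?thesis using zero_rest[of ?K "\<lambda>c. r c b" "{b}" a] nn that by auto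
  qed
  have pi: "p i > q i" using rowz[of i j] assms by force
  have qj: "q j > p j" using colz[of i j] assms by force
  have rii: "r i i = q i" using diag pi assms by auto
  have rjj: "r j j = p j" using diag qj assms by auto
  have rji: "r j i = 0" using rowz[of j i] qj assms by auto
  have pij: "q i + r i j + p j = min (p i + p j) (q i + q j)"
    using pairs[of i j] rii rjj rji assms by simp
  show ?thesis
  proof (intro conjI impI ballI)
    fix a b assume c1: "p i + p j \<le> q i + q j" and a: "a \<in> ?K" and b: "b \<in> ?K"
    assume h0: "a \<noteq> b \<and> b \<noteq> j"
    show "r a b = 0"
    proof (rule ccontr)
      assume h1: "r a b \<noteq> 0"
      note h = h0 h1
      have rij: "r i j = p i - q i" using pij c1 by linarith
      have qb: "q b > p b" using colz[of a b] h a b by force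
      have bi: "b \<noteq> i" using colz[of a i] h a pi assms by force
      have "(\<Sum>c\<in>?K. r i c) \<le> sum (r i) {i, j}" using rows rii rij assms by auto
      hence rib: "r i b = 0" using zero_rest[of ?K "r i" "{i,j}" b] nn assms b h bi by auto
      have rbi: "r b i = 0" using rowz[of b i] qb bi b assms by auto
      have rbb: "r b b = p b" using diag qb b by auto
      have "q i + p b = min (p i + p b) (q i + q b)"
        using pairs[of i b] rii rib rbi rbb assms b bi by simp
      thus False using pi qb by linarith
    qed
  next
    fix a b assume c2: "q i + q j \<le> p i + p j" and a: "a \<in> ?K" and b: "b \<in> ?K"
    assume h0: "a \<noteq> b \<and> a \<noteq> i"
    show "r a b = 0"
    proof (rule ccontr)
      assume h1: "r a b \<noteq> 0"
      note h = h0 h1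
      have rij: "r i j = q j - p j" using pij c2 by linarith
      have pa: "p a > q a" using rowz[of a b] h a b by force
      have aj: "a \<noteq> j" using rowz[of j b] h b qj assms by force
      have "(\<Sum>c\<in>?K. r c j) \<le> sum (\<lambda>c. r c j) {i, j}" using cols rjj rij assms by auto
      hence raj: "r a j = 0" using zero_rest[of ?K "\<lambda>c. r c j" "{i,j}" a] nn assms a h aj by auto
      have rja: "r j a = 0" using rowz[of j a] qj aj a assms by auto
      have raa: "r a a = q a" using diag pa a by auto
      have "q a + p j = min (p a + p j) (q a + q j)"
        using pairs[of a j] raa raj rja rjj assms a aj by simp
      thus False using pa qj by linarith
    qed
  qed
qed

end
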